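(* The wall $W$ has a $2$-queue layout (with respect to a linear order of $V(W)$) such that for all edges $pq$ and $pr$ with $p\prec q\prec r$ or $r\prec q\prec p$, the edges $pq$ and $pr$ are in distinct queues.
   Context: The wall is the infinite graph $W$ with vertex set $\mathbb{Z}^2$ and edge set $\{(x,y)(x+1,y): x,y\in\mathbb{Z}\}\cup\{(x,y)(x,y+1): x,y\in\mathbb{Z},\ x+y\text{ even}\}$. A $k$-queue layout of a graph consists of a linear order $\preceq$ of its vertex set and a partition of its edge set into $k$ parts (queues) such that no two edges in the same queue nest, i.e. there are no edges $ab$ and $cd$ in the same queue with $a\prec c\prec d\prec b$. *)

theory Defs
  imports Main
begin

type_synonym vtx = "int \<times> int"

definition wall_edges :: "vtx set set" where
  "wall_edges = {{(x, y), (x + 1, y)} | x y. True}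
              \<union> {{(x, y), (x, y + 1)} | x y. even (x + y)}"

definition prec :: "('a \<times> 'a) set \<Rightarrow> 'a \<Rightarrow> 'a \<Rightarrow> bool" where
  "prec R a b \<longleftrightarrow> (a, b) \<in> R \<and> a \<noteq> b"

text \<open>A k-queue layout of the graph with edge set E (vertex set UNIV):
  a linear order R of all vertices and an assignment Q of each edge to one of k queues
  (queues 0..k-1) such that no two edges in the same queue nest.\<close>
definition queue_layout :: "('a \<times> 'a) set \<Rightarrow> nat \<Rightarrow> ('a set \<Rightarrow> nat) \<Rightarrow> 'a set set \<Rightarrow> bool" where
  "queue_layout R k Q E \<longleftrightarrow>
     linear_order R \<and>
     (\<forall>e\<in>E. Q e < k) \<and>
     (\<forall>a b c d. {a, b} \<in> E \<and> {c, d} \<in> E \<and> Q {a, b} = Q {c, d} \<longrightarrow>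
        \<not> (prec R a c \<and> prec R c d \<and> prec R d b))"

end

theory Submission
  imports Defs
begin

definition LR :: "(vtx \<times> vtx) set" where
  "LR = {(a,b). snd a < snd b \<or> (snd a = snd b \<and> fst a \<le> fst b)}"

definition LQ :: "vtx set \<Rightarrow> nat" where
  "LQ e = (if \<exists>a\<in>e. \<exists>b\<in>e. snd a \<noteq> snd b then 1 else 0)"

lemma LQ2: "LQ {a,b} = (if snd a \<noteq> snd b then 1 else 0)"
  unfolding LQ_def by auto

lemma edge_cases:
  assumes "{a,b} \<in> wall_edges"
  shows "(snd a = snd b \<and> (fst b = fst a + 1 \<or> fst a = fst b + 1)) \<or>
         (fst a = fst b \<and> (snd b = snd a + 1 \<or> snd a = snd b + 1))"
proof -
  obtain x y where "{a,b} = {(x, y), (x + 1, y)} \<or> {a,b} = {(x, y), (x, y + 1)}"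
    using assms unfolding wall_edges_def by blast
  then have "(a = (x,y) \<and> b = (x+1,y)) \<or> (b = (x,y) \<and> a = (x+1,y)) \<or>
             (a = (x,y) \<and> b = (x,y+1)) \<or> (b = (x,y) \<and> a = (x,y+1))"
    unfolding doubleton_eq_iff by blast
  then show ?thesis by auto
qed

lemma precLR: "prec LR a b \<longleftrightarrow> a \<noteq> b \<and> (snd a < snd b \<or> (snd a = snd b \<and> fst a \<le> fst b))"
  unfolding prec_def LR_def by auto

lemma lin: "linear_order LR"
  unfolding linear_order_on_def partial_order_on_def preorder_on_def refl_on_def trans_def
    antisym_def total_on_def LR_def by (auto simp: prod_eq_iff)

theorem lemma12:
  shows "\<exists>(R :: (vtx \<times> vtx) set) (Q :: vtx set \<Rightarrow> nat).
           queue_layout R 2 Q wall_edges \<and>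
           (\<forall>p q r. {p, q} \<in> wall_edges \<and> {p, r} \<in> wall_edges \<and>
              ((prec R p q \<and> prec R q r) \<or> (prec R r q \<and> prec R q p)) \<longrightarrow>
              Q {p, q} \<noteq> Q {p, r})"
proof (intro exI conjI)
  show "queue_layout LR 2 LQ wall_edges"
    unfolding queue_layout_def
  proof (intro conjI allI impI)
    show "linear_order LR" by (rule lin)
    show "\<forall>e\<in>wall_edges. LQ e < 2" unfolding LQ_def by auto
    fix a b c d
    assume h: "{a, b} \<in> wall_edges \<and> {c, d} \<in> wall_edges \<and> LQ {a, b} = LQ {c, d}"
    obtain a1 a2 b1 b2 c1 c2 d1 d2 where e: "a = (a1,a2)" "b = (b1,b2)" "c = (c1,c2)" "d = (d1,d2)"
      by (cases a, cases b, cases c, cases d) auto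
    from h edge_cases[of a b] edge_cases[of c d] show
      "\<not> (prec LR a c \<and> prec LR c d \<and> prec LR d b)"
      unfolding LQ2 precLR e by (auto split: if_splits)
  qed
  show "\<forall>p q r. {p, q} \<in> wall_edges \<and> {p, r} \<in> wall_edges \<and>
              ((prec LR p q \<and> prec LR q r) \<or> (prec LR r q \<and> prec LR q p)) \<longrightarrow>
              LQ {p, q} \<noteq> LQ {p, r}"
  proof (intro allI impI)
    fix p q r
    assume h: "{p, q} \<in> wall_edges \<and> {p, r} \<in> wall_edges \<and>
              ((prec LR p q \<and> prec LR q r) \<or> (prec LR r q \<and> prec LR q p))"
    obtain a1 a2 b1 b2 c1 c2 where e: "p = (a1,a2)" "q = (b1,b2)" "r = (c1,c2)"
      by (cases p, cases q, cases r) auto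
    from h edge_cases[of p q] edge_cases[of p r] show "LQ {p, q} \<noteq> LQ {p, r}"
      unfolding LQ2 precLR e by (auto split: if_splits)
  qed
qed

end
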